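(* Let $f$ be a toric profile function as in the context, homogeneous of degree $1$, with strictly convex level set $N=f^{-1}(1)$, and let $\hbar>0$. For $m\in\mathbb{N}_0^n$ set $$E_m:=\sup_{(k,a)\in\mathcal{A}}\frac{\hbar\langle m,k\rangle}{a}=\sup_{k\in\mathbb{N}_0^n}\frac{\hbar\langle m,k\rangle}{a(k)} .$$ Then the EBK spectrum $\{f(\hbar m)\mid m\in\mathbb{N}_0^n\}$ of the associated Hamiltonian consists of the values $E_m$; precisely, $f(\hbar m)=E_m$ for every $m\in\mathbb{N}_0^n$. Moreover, $E_m$ is the unique real number such that for all $E\in\mathbb{R}$ $$\sup_{\ell\in\mathbb{N}}\ \inf_{k\in\mathbb{N}_\ell^n}\Bigl(E\,a(k)-\hbar\langle m,k\rangle\Bigr)=\begin{cases}+\infty&\text{if }E>E_m,\\-\infty&\text{if }E<E_m.\end{cases}$$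
   Context: Setting: $f:\mathbb{R}_{\ge0}^n\to[0,\infty)$ is continuous, smooth and positive on $\mathbb{R}_{\ge0}^n\setminus\{0\}$ (smooth up to the boundary faces), with $f(tp)=tf(p)$ for $t>0$. $N:=f^{-1}(1)$ is regular, with outward unit normal $n(p)=\nabla f(p)/|\nabla f(p)|$, assumed to satisfy $n(p)\in[0,\infty)^n$ for all $p\in N$. $N$ is strictly convex: $\{p\in\mathbb{R}^n_{\ge0}:f(p)\le1\}$ is convex and $N$ has everywhere positive normal curvatures. The marked action spectrum is $\mathcal{A}:=\{(k,\langle p,k\rangle)\mid k\in\mathbb{Z}^n\setminus\{0\},\ p\in N,\ n(p)=\lambda k\text{ for some }\lambda>0\}$. For $\ell\in\mathbb{N}_0$, $\mathbb{N}_\ell^n:=\{k\in\mathbb{Z}^n\mid k_j\ge\ell\text{ for all }j,\ \text{and }n(p)=\lambda k\text{ for some }p\in N,\lambda>0\}$; the supremum over $k\in\mathbb{N}_0^n$ in the definition of $E_m$ ranges over $k\in\mathbb{N}_0^n$ (excluding $0$). For such $k$, $a(k):=\langle p,k\rangle$ where $p\in N$ is the unique point with $n(p)$ positively proportional to $k$. *)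

theory Defs
  imports "HOL-Analysis.Analysis"
begin

definition orth :: "(real^'n) set" where
  "orth = {x. \<forall>i. 0 \<le> x $ i}"

text \<open>C-infinity functions on an open set: all partial derivatives of all orders exist
  and are continuous (coinductive characterisation).\<close>
coinductive smooth_on :: "(real^'n) set \<Rightarrow> (real^'n \<Rightarrow> real) \<Rightarrow> bool" where
  "\<lbrakk> continuous_on U F; \<forall>x\<in>U. F differentiable (at x);
     \<forall>i. smooth_on U (\<lambda>x. frechet_derivative F (at x) (axis i 1)) \<rbrakk> \<Longrightarrow> smooth_on U F"

definition gradF :: "(real^'n \<Rightarrow> real) \<Rightarrow> real^'n \<Rightarrow> real^'n" where
  "gradF F p = (\<chi> i. frechet_derivative F (at p) (axis i 1))"

definition hessF :: "(real^'n \<Rightarrow> real) \<Rightarrow> real^'n \<Rightarrow> real^'n \<Rightarrow> real^'n" where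
  "hessF F p v = (\<chi> i. frechet_derivative (\<lambda>x. frechet_derivative F (at x) (axis i 1)) (at p) v)"

definition levelN :: "(real^'n \<Rightarrow> real) \<Rightarrow> (real^'n) set" where
  "levelN f = {p \<in> orth. f p = 1}"

text \<open>g is the gradient of f at p (derivative taken within the orthant, so boundary
  points are covered).\<close>
definition is_grad :: "(real^'n \<Rightarrow> real) \<Rightarrow> real^'n \<Rightarrow> real^'n \<Rightarrow> bool" where
  "is_grad f p g \<longleftrightarrow> (f has_derivative (\<lambda>v. g \<bullet> v)) (at p within orth)"

definition normal_prop :: "(real^'n \<Rightarrow> real) \<Rightarrow> real^'n \<Rightarrow> real^'n \<Rightarrow> bool" where
  "normal_prop f p k \<longleftrightarrow>
     (\<exists>g c. is_grad f p g \<and> g \<noteq> 0 \<and> c > 0 \<and> g /\<^sub>R norm g = c *\<^sub>R k)"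

definition ivec :: "int^'n \<Rightarrow> real^'n" where
  "ivec k = (\<chi> i. real_of_int (k $ i))"

definition nvec :: "nat^'n \<Rightarrow> real^'n" where
  "nvec m = (\<chi> i. real (m $ i))"

definition action_spectrum :: "(real^'n \<Rightarrow> real) \<Rightarrow> ((int^'n) \<times> real) set" where
  "action_spectrum f = {(k, p \<bullet> ivec k) | k p. k \<noteq> 0 \<and> p \<in> levelN f \<and> normal_prop f p (ivec k)}"

definition Nset :: "(real^'n \<Rightarrow> real) \<Rightarrow> int \<Rightarrow> (int^'n) set" where
  "Nset f l = {k. (\<forall>j. l \<le> k $ j) \<and> (\<exists>p\<in>levelN f. normal_prop f p (ivec k))}"

definition act :: "(real^'n \<Rightarrow> real) \<Rightarrow> int^'n \<Rightarrow> real" where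
  "act f k = (THE p. p \<in> levelN f \<and> normal_prop f p (ivec k)) \<bullet> ivec k"

definition Em :: "(real^'n \<Rightarrow> real) \<Rightarrow> real \<Rightarrow> nat^'n \<Rightarrow> ereal" where
  "Em f hb m = (SUP ka\<in>action_spectrum f. ereal (hb * (nvec m \<bullet> ivec (fst ka)) / snd ka))"

end

theory Submission
  imports Defs
begin


lemma orth_iff: "x \<in> orth \<longleftrightarrow> (\<forall>i. 0 \<le> x $ i)" by (simp add: orth_def)

lemma closed_orth: "closed (orth :: (real^'n) set)"
proof -
  have "orth = (\<Inter>i. {x::real^'n. 0 \<le> x $ i})" by (auto simp: orth_def)
  moreover have "closed {x::real^'n. 0 \<le> x $ i}" for i
    by (intro closed_Collect_le continuous_intros)
  ultimately show ?thesis by (metis closed_INT)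
qed

lemma convex_orth: "convex (orth :: (real^'n) set)"
  unfolding convex_def orth_def by auto

lemma orth_scale: "p \<in> orth \<Longrightarrow> 0 \<le> t \<Longrightarrow> t *\<^sub>R p \<in> orth"
  by (auto simp: orth_def)

lemma orth_add: "p \<in> orth \<Longrightarrow> q \<in> orth \<Longrightarrow> p + q \<in> orth"
  by (auto simp: orth_def)

lemma inner_orth_nonneg: "p \<in> orth \<Longrightarrow> q \<in> orth \<Longrightarrow> 0 \<le> p \<bullet> (q::real^'n)"
  by (auto simp: orth_def inner_vec_def intro!: sum_nonneg)

locale toric =
  fixes f :: "real^'n \<Rightarrow> real"
  assumes cont: "continuous_on orth f"
    and nonneg: "\<forall>p\<in>orth. 0 \<le> f p"
    and pos: "\<forall>p\<in>orth - {0}. 0 < f p"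
    and homog: "\<forall>p\<in>orth. \<forall>t>0. f (t *\<^sub>R p) = t * f p"
    and smooth: "\<exists>U F. open U \<and> orth - {0} \<subseteq> U \<and> smooth_on U F \<and>
                   (\<forall>x\<in>orth - {0}. F x = f x) \<and>
                   (\<forall>p\<in>levelN f. \<forall>v. v \<noteq> 0 \<and> gradF F p \<bullet> v = 0 \<longrightarrow> 0 < v \<bullet> hessF F p v)"
    and regular: "\<forall>p\<in>levelN f. \<exists>g. is_grad f p g \<and> g \<noteq> 0"
    and normal_nonneg: "\<forall>p\<in>levelN f. \<forall>g. is_grad f p g \<longrightarrow> g /\<^sub>R norm g \<in> orth"
    and convex: "convex {p\<in>orth. f p \<le> 1}"
begin

definition "K = {p\<in>orth. f p \<le> 1}"

lemma f0: "f 0 = 0"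
proof -
  have "(0::real^'n) \<in> orth" by (simp add: orth_def)
  hence "f ((2::real) *\<^sub>R 0) = 2 * f 0" using homog by (metis zero_less_numeral)
  thus ?thesis by simp
qed

lemma levelN_iff: "p \<in> levelN f \<longleftrightarrow> p \<in> orth \<and> f p = 1" by (simp add: levelN_def)

lemma levelN_nz: "p \<in> levelN f \<Longrightarrow> p \<noteq> 0" using f0 by (auto simp: levelN_def)

lemma levelN_K: "p \<in> levelN f \<Longrightarrow> p \<in> K" by (auto simp: levelN_def K_def)

lemma normalize_N: assumes "x \<in> orth" "x \<noteq> 0" shows "(1 / f x) *\<^sub>R x \<in> levelN f"
proof -
  have fx: "f x > 0" using pos assms by auto
  have "f ((1 / f x) *\<^sub>R x) = (1 / f x) * f x" using homog assms fx by auto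
  thus ?thesis using fx assms by (auto simp: levelN_def intro!: orth_scale)
qed

lemma closed_K: "closed K"
  unfolding K_def by (intro continuous_on_closed_Collect_le cont continuous_intros closed_orth)

lemma bounded_K: "\<exists>R>0. \<forall>x\<in>K. norm x \<le> R"
proof -
  define S where "S = sphere (0::real^'n) 1 \<inter> orth"
  have cS: "compact S" unfolding S_def by (intro compact_Int_closed closed_orth) auto
  obtain i0 :: 'n where True by auto
  have "axis i0 (1::real) \<in> orth" by (auto simp: orth_def axis_def)
  hence "axis i0 1 \<in> S" by (simp add: S_def)
  hence neS: "S \<noteq> {}" by auto
  have "continuous_on S f" using cont by (rule continuous_on_subset) (auto simp: S_def)
  then obtain y where yS: "y \<in> S" and ymin: "\<forall>x\<in>S. f y \<le> f x"
    using continuous_attains_inf[OF cS neS] by blast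
  have fy: "f y > 0" using pos yS by (auto simp: S_def)
  show ?thesis
  proof (intro exI[of _ "1 / f y"] conjI ballI)
    show "0 < 1 / f y" using fy by simp
    fix x assume xK: "x \<in> K"
    show "norm x \<le> 1 / f y"
    proof (cases "x = 0")
      case True thus ?thesis using fy by simp
    next
      case False
      have xo: "x \<in> orth" using xK by (simp add: K_def)
      have "(1 / norm x) *\<^sub>R x \<in> S" using False xo by (auto simp: S_def intro!: orth_scale)
      hence "f y \<le> f ((1 / norm x) *\<^sub>R x)" using ymin by blast
      also have "\<dots> = f x / norm x" using homog xo False by auto
      finally have "f y * norm x \<le> f x" using False by (simp add: field_simps)
      also have "\<dots> \<le> 1" using xK by (simp add: K_def)
      finally show ?thesis using fy by (simp add: field_simps mult.commute)
    qed
  qed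
qed

lemma compact_K: "compact K"
  using closed_K bounded_K by (metis bounded_iff compact_eq_bounded_closed)

end


context toric begin

lemma euler:
  assumes p: "p \<in> orth" and g: "is_grad f p g"
  shows "g \<bullet> p = f p"
proof -
  have d1: "((\<lambda>t::real. t *\<^sub>R p) has_derivative (\<lambda>t. t *\<^sub>R p)) (at 1 within {0<..})"
    by (auto intro!: derivative_eq_intros)
  have sub: "(\<lambda>t::real. t *\<^sub>R p) ` {0<..} \<subseteq> orth" using p by (auto intro!: orth_scale)
  have d2: "(f has_derivative (\<lambda>v. g \<bullet> v)) (at ((\<lambda>t::real. t *\<^sub>R p) 1) within (\<lambda>t::real. t *\<^sub>R p) ` {0<..})"
    using g unfolding is_grad_def by (auto intro: has_derivative_subset[OF _ sub])
  have d3: "(f \<circ> (\<lambda>t::real. t *\<^sub>R p) has_derivative (\<lambda>v. g \<bullet> v) \<circ> (\<lambda>t. t *\<^sub>R p)) (at 1 within {0<..})"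
    by (rule diff_chain_within[OF d1 d2])
  have "(f \<circ> (\<lambda>t::real. t *\<^sub>R p) has_derivative (\<lambda>v. g \<bullet> v) \<circ> (\<lambda>t. t *\<^sub>R p)) (at 1)"
    using d3 at_within_open[of "1::real" "{0<..}"] by simp
  hence d4: "((\<lambda>t. t * f p) has_derivative (\<lambda>v. g \<bullet> v) \<circ> (\<lambda>t. t *\<^sub>R p)) (at 1)"
    by (rule has_derivative_transform_within_open[of _ _ _ _ "{0<..}"]) (use homog p in auto)
  moreover have "((\<lambda>t. t * f p) has_derivative (\<lambda>t. t * f p)) (at 1)"
    by (auto intro!: derivative_eq_intros)
  ultimately have "(\<lambda>v. g \<bullet> v) \<circ> (\<lambda>t. t *\<^sub>R p) = (\<lambda>t. t * f p)"
    by (rule has_derivative_unique)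
  from fun_cong[OF this, of 1] show ?thesis by simp
qed

lemma support:
  assumes p: "p \<in> levelN f" and g: "is_grad f p g" and x: "x \<in> K"
  shows "g \<bullet> x \<le> 1"
proof (rule ccontr)
  assume "\<not> g \<bullet> x \<le> 1"
  have gp: "g \<bullet> p = 1" using euler[OF _ g] p by (auto simp: levelN_def)
  define v where "v = x - p"
  have gv: "g \<bullet> v > 0" using \<open>\<not> g \<bullet> x \<le> 1\<close> gp by (simp add: v_def inner_diff_right)
  define \<gamma> where "\<gamma> = (\<lambda>t::real. p + t *\<^sub>R v)"
  have pK: "p \<in> K" using levelN_K[OF p] .
  have gK: "\<gamma> t \<in> K" if "t \<in> {0..1}" for t
  proof -
    have "\<gamma> t = (1 - t) *\<^sub>R p + t *\<^sub>R x" by (simp add: \<gamma>_def v_def algebra_simps)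
    thus ?thesis using convex[unfolded convex_def] pK x that by (auto simp: K_def)
  qed
  have d1: "(\<gamma> has_derivative (\<lambda>t. t *\<^sub>R v)) (at 0 within {0..1})"
    unfolding \<gamma>_def by (auto intro!: derivative_eq_intros)
  have sub: "\<gamma> ` {0..1} \<subseteq> orth" using gK by (auto simp: K_def)
  have d2: "(f has_derivative (\<lambda>w. g \<bullet> w)) (at (\<gamma> 0) within \<gamma> ` {0..1})"
    using g unfolding is_grad_def \<gamma>_def by (auto intro: has_derivative_subset[OF _ sub[unfolded \<gamma>_def]])
  have d3: "(f \<circ> \<gamma> has_derivative (\<lambda>w. g \<bullet> w) \<circ> (\<lambda>t. t *\<^sub>R v)) (at 0 within {0..1})"
    by (rule diff_chain_within[OF d1 d2])
  have "((f \<circ> \<gamma>) has_field_derivative (g \<bullet> v)) (at 0 within {0..1})"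
    unfolding has_field_derivative_def
    by (rule has_derivative_eq_rhs[OF d3]) (auto simp: fun_eq_iff)
  hence "((\<lambda>t. ((f \<circ> \<gamma>) t - (f \<circ> \<gamma>) 0) / (t - 0)) \<longlongrightarrow> g \<bullet> v) (at_right 0)"
    unfolding has_field_derivative_iff using at_within_Icc_at_right[of "0::real" 1] by simp
  hence "eventually (\<lambda>t. ((f \<circ> \<gamma>) t - (f \<circ> \<gamma>) 0) / (t - 0) > 0) (at_right 0)"
    using gv by (rule order_tendstoD)
  then obtain b where b: "b > 0" and hb: "\<And>t. t > 0 \<Longrightarrow> t < b \<Longrightarrow> ((f \<circ> \<gamma>) t - (f \<circ> \<gamma>) 0) / (t - 0) > 0"
    unfolding eventually_at_right[of "0::real" 1, simplified] by blast
  define t where "t = min (b/2) (1/2)"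
  have t: "t > 0" "t < b" "t \<in> {0..1}" using b by (auto simp: t_def)
  have "((f \<circ> \<gamma>) t - (f \<circ> \<gamma>) 0) / t > 0" using hb[OF t(1,2)] by simp
  hence "f (\<gamma> t) > f (\<gamma> 0)" using t(1) by (simp add: zero_less_divide_iff)
  moreover have "f (\<gamma> 0) = 1" using p by (simp add: \<gamma>_def levelN_def)
  moreover have "f (\<gamma> t) \<le> 1" using gK[OF t(3)] by (simp add: K_def)
  ultimately show False by simp
qed

end


lemma dir_deriv:
  fixes G :: "real^'n \<Rightarrow> real"
  assumes "(G has_derivative D) (at (x0 + t *\<^sub>R v))"
  shows "((\<lambda>s. G (x0 + s *\<^sub>R v)) has_field_derivative D v) (at t)"
proof -
  have l: "linear D" using has_derivative_linear[OF assms] .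
  have "((\<lambda>s. x0 + s *\<^sub>R v) has_derivative (\<lambda>s. s *\<^sub>R v)) (at t)"
    by (auto intro!: derivative_eq_intros)
  from has_derivative_compose[OF this assms]
  have "((\<lambda>s. G (x0 + s *\<^sub>R v)) has_derivative (\<lambda>s. D (s *\<^sub>R v))) (at t)" .
  thus ?thesis unfolding has_field_derivative_def
    by (rule has_derivative_eq_rhs) (auto simp: fun_eq_iff linear_scale[OF l])
qed

lemma sum_axis_expand:
  fixes D :: "real^'n \<Rightarrow> real"
  assumes "linear D"
  shows "D v = (\<Sum>i\<in>UNIV. v $ i * D (axis i 1))"
proof -
  have "D v = D (\<Sum>i\<in>UNIV. v $ i *\<^sub>R axis i 1)"
    using basis_expansion[of v] by (simp add: scalar_mult_eq_scaleR)
  also have "\<dots> = (\<Sum>i\<in>UNIV. v $ i * D (axis i 1))"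
    by (simp add: linear_sum[OF assms] linear_scale[OF assms])
  finally show ?thesis .
qed

context toric begin

lemma noseg:
  assumes p: "p \<in> levelN f" and q: "q \<in> levelN f"
    and seg: "\<forall>t\<in>{0..1}. f (p + t *\<^sub>R (q - p)) = 1"
  shows "p = q"
proof (rule ccontr)
  assume "p \<noteq> q"
  define v where "v = q - p"
  have v0: "v \<noteq> 0" using \<open>p \<noteq> q\<close> by (simp add: v_def)
  obtain U F where U: "open U" and oU: "orth - {0} \<subseteq> U" and sm: "smooth_on U F"
    and Ff: "\<forall>x\<in>orth - {0}. F x = f x"
    and hess: "\<forall>p\<in>levelN f. \<forall>v. v \<noteq> 0 \<and> gradF F p \<bullet> v = 0 \<longrightarrow> 0 < v \<bullet> hessF F p v"
    using smooth by blast
  define dF where "dF = (\<lambda>i x. frechet_derivative F (at x) (axis i (1::real)))"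
  from sm have diffF: "\<forall>x\<in>U. F differentiable (at x)"
    and smi: "\<forall>i. smooth_on U (dF i)"
    by (cases rule: smooth_on.cases, auto simp: dF_def)+
  have diffi: "\<forall>x\<in>U. dF i differentiable (at x)" for i
    using smi[rule_format, of i] by (cases rule: smooth_on.cases) auto
  have seg_orth: "p + t *\<^sub>R v \<in> orth" if "t \<in> {0..1}" for t
  proof -
    have "p + t *\<^sub>R v = (1 - t) *\<^sub>R p + t *\<^sub>R q" by (simp add: v_def algebra_simps)
    thus ?thesis using convex_orth[unfolded convex_def] p q that by (auto simp: levelN_def)
  qed
  have Fseg: "F (p + t *\<^sub>R v) = 1" if "t \<in> {0..1}" for t
  proof -
    have "f (p + t *\<^sub>R v) = 1" using seg that by (simp add: v_def)
    hence "p + t *\<^sub>R v \<noteq> 0" using f0 by auto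
    thus ?thesis using Ff seg_orth[OF that] \<open>f (p + t *\<^sub>R v) = 1\<close> by auto
  qed
  have pU: "p \<in> U" using oU p levelN_nz[OF p] by (auto simp: levelN_def)
  obtain e where e: "e > 0" "ball p e \<subseteq> U" using U pU open_contains_ball by blast
  define \<delta> where "\<delta> = min 1 (e / norm v)"
  have \<delta>: "\<delta> > 0" "\<delta> \<le> 1" using e v0 by (auto simp: \<delta>_def)
  have inU: "p + t *\<^sub>R v \<in> U" if "\<bar>t\<bar> < \<delta>" for t
  proof -
    have "\<bar>t\<bar> * norm v < e" using that v0 by (auto simp: \<delta>_def field_simps)
    hence "p + t *\<^sub>R v \<in> ball p e" by (simp add: dist_norm)
    thus ?thesis using e by auto
  qed
  define ch where "ch = (\<lambda>t. \<Sum>i\<in>UNIV. v $ i * dF i (p + t *\<^sub>R v))"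
  have dpsi: "((\<lambda>s. F (p + s *\<^sub>R v)) has_field_derivative ch t) (at t)" if "\<bar>t\<bar> < \<delta>" for t
  proof -
    have hd: "(F has_derivative frechet_derivative F (at (p + t *\<^sub>R v))) (at (p + t *\<^sub>R v))"
      using diffF inU[OF that] by (intro frechet_derivative_works[THEN iffD1]) blast
    have "frechet_derivative F (at (p + t *\<^sub>R v)) v = ch t"
      unfolding ch_def dF_def by (rule sum_axis_expand[OF has_derivative_linear[OF hd]])
    thus ?thesis using dir_deriv[OF hd] by simp
  qed
  have chi0: "ch t = 0" if "0 < t" "t < \<delta>" for t
  proof -
    have "((\<lambda>s. F (p + s *\<^sub>R v)) has_field_derivative 0) (at t)"
      by (rule has_field_derivative_transform_within_open[OF DERIV_const[of 1] _ _ , of "{0<..<\<delta>}"])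
         (use that \<delta> in \<open>auto intro!: Fseg\<close>)
    thus ?thesis using dpsi[of t] that DERIV_unique by force
  qed
  define H where "H = (\<Sum>i\<in>UNIV. v $ i * frechet_derivative (dF i) (at p) v)"
  have dchi: "(ch has_field_derivative H) (at 0)"
    unfolding ch_def H_def
  proof (intro DERIV_sum DERIV_cmult)
    fix i
    have "(dF i has_derivative frechet_derivative (dF i) (at (p + 0 *\<^sub>R v))) (at (p + 0 *\<^sub>R v))"
      using diffi pU by (intro frechet_derivative_works[THEN iffD1]) simp
    thus "((\<lambda>t. dF i (p + t *\<^sub>R v)) has_field_derivative frechet_derivative (dF i) (at p) v) (at 0)"
      using dir_deriv by fastforce
  qed
  have ev: "eventually (\<lambda>t. ch t = 0) (at_right 0)"
    unfolding eventually_at_right[of "0::real" 1, simplified] using \<delta> chi0 by blast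
  have c0: "ch 0 = 0"
  proof -
    have "(ch \<longlongrightarrow> ch 0) (at_right 0)"
      using DERIV_isCont[OF dchi] by (simp add: isCont_def filterlim_at_split)
    moreover have "(ch \<longlongrightarrow> 0) (at_right 0)"
      by (rule Lim_transform_eventually[OF tendsto_const]) (use ev in \<open>auto elim: eventually_mono\<close>)
    ultimately show ?thesis using tendsto_unique trivial_limit_at_right_real by blast
  qed
  have H0: "H = 0"
  proof -
    have "((\<lambda>y. (ch y - ch 0) / (y - 0)) \<longlongrightarrow> H) (at_right 0)"
      using has_field_derivative_at_within[OF dchi, of "{0<..}"] unfolding has_field_derivative_iff .
    moreover have "((\<lambda>y. (ch y - ch 0) / (y - 0)) \<longlongrightarrow> 0) (at_right 0)"
      by (rule Lim_transform_eventually[OF tendsto_const]) (use ev c0 in \<open>auto elim: eventually_mono\<close>)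
    ultimately show ?thesis using tendsto_unique trivial_limit_at_right_real by blast
  qed
  have "gradF F p \<bullet> v = ch 0"
    by (simp add: gradF_def ch_def dF_def inner_vec_def mult.commute)
  hence "0 < v \<bullet> hessF F p v" using hess p v0 c0 by auto
  moreover have "v \<bullet> hessF F p v = H"
    by (simp add: hessF_def H_def dF_def inner_vec_def)
  ultimately show False using H0 by simp
qed

end


context toric begin

lemma normal_facts:
  assumes p: "p \<in> levelN f" and np: "normal_prop f p k"
  shows "k \<in> orth" "\<forall>x\<in>K. k \<bullet> x \<le> k \<bullet> p" "k \<bullet> p > 0" "k \<noteq> 0"
proof -
  obtain g c where g: "is_grad f p g" "g \<noteq> 0" "c > 0" "g /\<^sub>R norm g = c *\<^sub>R k"
    using np unfolding normal_prop_def by blast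
  have gn: "g /\<^sub>R norm g \<in> orth" using normal_nonneg p g by blast
  define a where "a = 1 / (c * norm g)"
  have a: "a > 0" using g by (simp add: a_def)
  have k: "k = a *\<^sub>R g"
  proof -
    have "k = (1/c) *\<^sub>R (g /\<^sub>R norm g)" using g by simp
    thus ?thesis by (simp add: a_def field_simps)
  qed
  have gp: "g \<bullet> p = 1" using euler[OF _ g(1)] p by (auto simp: levelN_def)
  show "k \<in> orth"
  proof -
    have "k = (1/c) *\<^sub>R (g /\<^sub>R norm g)" using g by simp
    thus ?thesis using gn g(3) by (metis orth_scale less_eq_real_def zero_less_divide_1_iff)
  qed
  show "\<forall>x\<in>K. k \<bullet> x \<le> k \<bullet> p"
    using support[OF p g(1)] a gp by (auto simp: k)
  show "k \<bullet> p > 0" using a gp by (simp add: k)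
  show "k \<noteq> 0" using a g by (simp add: k)
qed

lemma maxN:
  assumes q: "q \<in> K" and mx: "\<forall>x\<in>K. \<nu> \<bullet> x \<le> \<nu> \<bullet> q" and pq: "\<nu> \<bullet> q > 0"
  shows "q \<in> levelN f"
proof -
  have qo: "q \<in> orth" and fq1: "f q \<le> 1" using q by (auto simp: K_def)
  have q0: "q \<noteq> 0" using pq by auto
  have fq: "f q > 0" using pos qo q0 by auto
  have "f q = 1"
  proof (rule ccontr)
    assume "f q \<noteq> 1"
    hence lt: "f q < 1" using fq1 by simp
    have "(1 / f q) *\<^sub>R q \<in> K" using normalize_N[OF qo q0] levelN_K by blast
    hence "\<nu> \<bullet> ((1 / f q) *\<^sub>R q) \<le> \<nu> \<bullet> q" using mx by blast
    hence "(\<nu> \<bullet> q) / f q \<le> \<nu> \<bullet> q" by simp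
    hence "\<nu> \<bullet> q \<le> (\<nu> \<bullet> q) * f q" using fq by (simp add: divide_le_eq)
    moreover have "(\<nu> \<bullet> q) * f q < \<nu> \<bullet> q" using pq lt by (simp add: mult_less_cancel_left1)
    ultimately show False by simp
  qed
  thus ?thesis using qo by (simp add: levelN_def)
qed

lemma maxuniq:
  assumes p: "p \<in> K" and q: "q \<in> K"
    and mp: "\<forall>x\<in>K. \<nu> \<bullet> x \<le> \<nu> \<bullet> p" and mq: "\<forall>x\<in>K. \<nu> \<bullet> x \<le> \<nu> \<bullet> q"
    and pp: "\<nu> \<bullet> p > 0"
  shows "p = q"
proof -
  have eq: "\<nu> \<bullet> q = \<nu> \<bullet> p" using mp mq p q by (simp add: order_antisym)
  have pN: "p \<in> levelN f" using maxN[OF p mp pp] .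
  have qN: "q \<in> levelN f" using maxN[OF q mq] eq pp by simp
  have "\<forall>t\<in>{0..1}. f (p + t *\<^sub>R (q - p)) = 1"
  proof
    fix t :: real assume t: "t \<in> {0..1}"
    have y: "p + t *\<^sub>R (q - p) = (1 - t) *\<^sub>R p + t *\<^sub>R q" by (simp add: algebra_simps)
    have yK: "p + t *\<^sub>R (q - p) \<in> K"
      unfolding y using convex[unfolded convex_def] p q t by (auto simp: K_def)
    have "\<nu> \<bullet> (p + t *\<^sub>R (q - p)) = \<nu> \<bullet> p" using eq by (simp add: inner_add_right inner_diff_right)
    hence "p + t *\<^sub>R (q - p) \<in> levelN f" using maxN[OF yK, of \<nu>] mp pp by simp
    thus "f (p + t *\<^sub>R (q - p)) = 1" by (simp add: levelN_def)
  qed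
  thus ?thesis using noseg[OF pN qN] by blast
qed

lemma uniqN:
  assumes p: "p \<in> levelN f" "normal_prop f p k" and q: "q \<in> levelN f" "normal_prop f q k"
  shows "p = q"
  using maxuniq[OF levelN_K[OF p(1)] levelN_K[OF q(1)]] normal_facts[OF p] normal_facts[OF q] by blast

lemma act_eq:
  assumes p: "p \<in> levelN f" "normal_prop f p (ivec k)"
  shows "act f k = p \<bullet> ivec k"
proof -
  have "(THE p. p \<in> levelN f \<and> normal_prop f p (ivec k)) = p"
    using p uniqN by (intro the_equality) auto
  thus ?thesis by (simp add: act_def)
qed

end



lemma interior_orth:
  assumes "\<forall>i. (p::real^'n) $ i > 0"
  shows "\<exists>r>0. ball p r \<subseteq> orth"
proof -
  define r where "r = Min (range (\<lambda>i. p $ i))"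
  have r: "r > 0" using assms by (simp add: r_def Min_gr_iff)
  have "ball p r \<subseteq> orth"
  proof
    fix x assume "x \<in> ball p r"
    hence d: "norm (x - p) < r" by (simp add: dist_norm norm_minus_commute)
    show "x \<in> orth" unfolding orth_def
    proof (intro CollectI allI)
      fix i
      have "\<bar>(x - p) $ i\<bar> \<le> norm (x - p)" by (rule component_le_norm_cart)
      moreover have "r \<le> p $ i" unfolding r_def by (rule Min_le) auto
      ultimately show "0 \<le> x $ i" using d by auto
    qed
  qed
  thus ?thesis using r by blast
qed

context toric begin

lemma lagrange:
  assumes pp: "\<forall>i. p $ i > 0" and f1: "f p = 1"
    and mx: "\<forall>x\<in>K. \<nu> \<bullet> x \<le> \<nu> \<bullet> p" and n0: "\<nu> \<noteq> 0"
  shows "normal_prop f p \<nu>"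
proof -
  have po: "p \<in> orth" using pp by (auto simp: orth_def less_imp_le)
  have pN: "p \<in> levelN f" using po f1 by (simp add: levelN_def)
  obtain g where g: "is_grad f p g" "g \<noteq> 0" using regular pN by blast
  obtain r where r: "r > 0" "ball p r \<subseteq> orth" using interior_orth[OF pp] by blast
  have "p \<in> interior orth" using r by (auto simp: mem_interior)
  hence dg: "(f has_derivative (\<lambda>v. g \<bullet> v)) (at p)"
    using g(1) at_within_interior[of p orth] by (simp add: is_grad_def)
  have C: "\<nu> \<bullet> w \<le> 0" if gw: "g \<bullet> w < 0" for w
  proof -
    have "((\<lambda>s. f (p + s *\<^sub>R w)) has_field_derivative g \<bullet> w) (at 0)"
      using dir_deriv[of f "\<lambda>v. g \<bullet> v" p 0 w] dg by simp
    from DERIV_neg_dec_right[OF this gw]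
    obtain d where d: "d > 0" "\<And>h. h > 0 \<Longrightarrow> h < d \<Longrightarrow> f (p + h *\<^sub>R w) < f p" by auto
    define h where "h = min (d/2) (r / (2 * (norm w + 1)))"
    have "r / (2 * (norm w + 1)) > 0" using r(1) by (intro divide_pos_pos) (auto intro: add_nonneg_pos)
    hence h: "h > 0" "h < d" using d by (auto simp: h_def)
    have "h * norm w < r"
    proof -
      have "h * norm w \<le> (r / (2 * (norm w + 1))) * norm w"
        by (intro mult_right_mono) (auto simp: h_def)
      also have "\<dots> = r * (norm w / (2 * (norm w + 1)))" by simp
      also have "\<dots> < r * 1"
      proof (intro mult_strict_left_mono r(1))
        have "norm w < 2 * (norm w + 1)" by (smt (verit) norm_ge_zero)
        moreover have "2 * (norm w + 1) > 0" by (smt (verit) norm_ge_zero)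
        ultimately show "norm w / (2 * (norm w + 1)) < 1" by (simp add: divide_less_eq)
      qed
      finally show ?thesis by simp
    qed
    hence "p + h *\<^sub>R w \<in> ball p r" using h by (simp add: dist_norm)
    hence "p + h *\<^sub>R w \<in> orth" using r by auto
    moreover have "f (p + h *\<^sub>R w) < 1" using d(2)[OF h] f1 by simp
    ultimately have "p + h *\<^sub>R w \<in> K" by (simp add: K_def)
    hence "\<nu> \<bullet> (p + h *\<^sub>R w) \<le> \<nu> \<bullet> p" using mx by blast
    hence "h * (\<nu> \<bullet> w) \<le> 0" by (simp add: inner_add_right)
    thus ?thesis using h by (simp add: mult_le_0_iff)
  qed
  define c where "c = (\<nu> \<bullet> g) / (g \<bullet> g)"
  define w0 where "w0 = \<nu> - c *\<^sub>R g"
  have gg: "g \<bullet> g > 0" using g by simp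
  have gw0: "g \<bullet> w0 = 0" using gg by (simp add: w0_def c_def inner_diff_right inner_commute)
  have c0: "c \<ge> 0"
  proof -
    have "\<nu> \<bullet> (- g) \<le> 0" using C[of "-g"] gg by simp
    thus ?thesis using gg by (simp add: c_def)
  qed
  have w00: "w0 = 0"
  proof (rule ccontr)
    assume "w0 \<noteq> 0"
    define A where "A = w0 \<bullet> w0"
    define B where "B = c * (g \<bullet> g)"
    have A: "A > 0" using \<open>w0 \<noteq> 0\<close> by (simp add: A_def)
    have B: "B \<ge> 0" using c0 gg by (simp add: B_def)
    define s where "s = A / (2 * B + 2)"
    have s: "s > 0" using A B by (simp add: s_def)
    have "g \<bullet> (w0 - s *\<^sub>R g) < 0" using gw0 s gg by (simp add: inner_diff_right)
    hence "\<nu> \<bullet> (w0 - s *\<^sub>R g) \<le> 0" by (rule C)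
    moreover have "\<nu> = w0 + c *\<^sub>R g" by (simp add: w0_def)
    ultimately have "(w0 + c *\<^sub>R g) \<bullet> (w0 - s *\<^sub>R g) \<le> 0" by simp
    hence "A - s * B \<le> 0" using gw0
      by (simp add: A_def B_def inner_add_left inner_diff_right inner_commute algebra_simps)
    moreover have "s * B < A"
    proof -
      have "s * B = A * (B / (2 * B + 2))" by (simp add: s_def)
      also have "\<dots> < A * 1" using A B by (intro mult_strict_left_mono) auto
      finally show ?thesis by simp
    qed
    ultimately show False by simp
  qed
  hence nu: "\<nu> = c *\<^sub>R g" by (simp add: w0_def)
  have cpos: "c > 0" using c0 n0 nu by (cases "c = 0") auto
  show ?thesis unfolding normal_prop_def
  proof (intro exI conjI)
    show "is_grad f p g" "g \<noteq> 0" by (fact g)+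
    show "0 < 1 / (c * norm g)" using cpos g by simp
    show "g /\<^sub>R norm g = (1 / (c * norm g)) *\<^sub>R \<nu>" using cpos g by (simp add: nu divide_inverse)
  qed
qed

end



lemma pos_near:
  assumes "\<forall>i. (p::real^'n) $ i > 0"
  shows "\<exists>r>0. \<forall>x. dist x p < r \<longrightarrow> (\<forall>i. x $ i > 0)"
proof -
  define r where "r = Min (range (\<lambda>i. p $ i))"
  have r: "r > 0" using assms by (simp add: r_def Min_gr_iff)
  have "\<forall>x. dist x p < r \<longrightarrow> (\<forall>i. x $ i > 0)"
  proof (intro allI impI)
    fix x i assume "dist x p < r"
    hence d: "norm (x - p) < r" by (simp add: dist_norm)
    have "\<bar>(x - p) $ i\<bar> \<le> norm (x - p)" by (rule component_le_norm_cart)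
    moreover have "r \<le> p $ i" unfolding r_def by (rule Min_le) auto
    ultimately show "0 < x $ i" using d by auto
  qed
  thus ?thesis using r by blast
qed

context toric begin

lemma normal_prop_scale:
  assumes "normal_prop f p k" "t > 0"
  shows "normal_prop f p (t *\<^sub>R k)"
proof -
  obtain g c where g: "is_grad f p g" "g \<noteq> 0" "c > 0" "g /\<^sub>R norm g = c *\<^sub>R k"
    using assms(1) unfolding normal_prop_def by blast
  show ?thesis unfolding normal_prop_def
    by (rule exI[of _ g], rule exI[of _ "c / t"]) (use g assms(2) in auto)
qed

lemma gap:
  assumes x1: "x1 \<in> levelN f" and g1: "is_grad f x1 g1" and \<eta>: "\<eta> > 0"
  shows "\<exists>M<1. \<forall>x\<in>K. \<eta> \<le> dist x x1 \<longrightarrow> g1 \<bullet> x \<le> M"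
proof -
  define S where "S = K \<inter> {x. \<eta> \<le> dist x x1}"
  have cS: "compact S" unfolding S_def
    by (intro compact_Int_closed compact_K closed_Collect_le continuous_intros)
  show ?thesis
  proof (cases "S = {}")
    case True thus ?thesis by (intro exI[of _ 0]) (auto simp: S_def)
  next
    case False
    have "continuous_on S (\<lambda>x. g1 \<bullet> x)" by (intro continuous_intros)
    then obtain z where z: "z \<in> S" "\<forall>x\<in>S. g1 \<bullet> x \<le> g1 \<bullet> z"
      using continuous_attains_sup[OF cS False] by blast
    have zK: "z \<in> K" using z by (simp add: S_def)
    have g1x1: "g1 \<bullet> x1 = 1" using euler[OF _ g1] x1 by (auto simp: levelN_def)
    have "g1 \<bullet> z < 1"
    proof (rule ccontr)
      assume "\<not> g1 \<bullet> z < 1"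
      hence "g1 \<bullet> z = 1" using support[OF x1 g1 zK] by simp
      hence "x1 = z"
        using maxuniq[OF levelN_K[OF x1] zK, of g1] support[OF x1 g1] g1x1 by auto
      thus False using z \<eta> by (simp add: S_def)
    qed
    thus ?thesis using z by (intro exI[of _ "g1 \<bullet> z"]) (auto simp: S_def)
  qed
qed


lemma dense_main:
  assumes x1p: "\<forall>i. x1 $ i > 0" and fx1: "f x1 = 1" and g1: "is_grad f x1 g1"
    and y: "y \<in> orth" and \<epsilon>: "\<epsilon> > 0"
  shows "\<exists>\<delta>>0. \<forall>\<nu>. norm (\<nu> - g1) < \<delta> \<longrightarrow> \<nu> \<noteq> 0 \<longrightarrow>
           (\<exists>p. p \<in> levelN f \<and> normal_prop f p \<nu> \<and> (y \<bullet> g1 - \<epsilon>) * (p \<bullet> \<nu>) \<le> y \<bullet> \<nu>)"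
proof -
  have x1o: "x1 \<in> orth" using x1p by (auto simp: orth_def less_imp_le)
  have x1N: "x1 \<in> levelN f" using x1o fx1 by (simp add: levelN_def)
  have g1x1: "g1 \<bullet> x1 = 1" using euler[OF x1o g1] fx1 by simp
  obtain R where R: "R > 0" "\<forall>x\<in>K. norm x \<le> R" using bounded_K by blast
  obtain \<eta> where \<eta>: "\<eta> > 0" "\<forall>x. dist x x1 < \<eta> \<longrightarrow> (\<forall>i. x $ i > 0)" using pos_near[OF x1p] by blast
  obtain M where M: "M < 1" "\<forall>x\<in>K. \<eta> \<le> dist x x1 \<longrightarrow> g1 \<bullet> x \<le> M" using gap[OF x1N g1 \<eta>(1)] by blast
  define a where "a = y \<bullet> g1"
  define Q where "Q = norm y + \<bar>a - \<epsilon>\<bar> * R + 1"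
  have Q: "Q > 0" using R by (simp add: Q_def add_nonneg_pos)
  define \<delta> where "\<delta> = min (1 / (2 * R)) (min ((1 - M) / (4 * R)) (\<epsilon> / Q))"
  have \<delta>: "\<delta> > 0" using R M Q \<epsilon> by (simp add: \<delta>_def)
  have \<delta>R1: "\<delta> * R \<le> 1/2"
  proof -
    have "\<delta> \<le> 1 / (2 * R)" by (simp add: \<delta>_def)
    hence "\<delta> * R \<le> 1 / (2 * R) * R" using R by (intro mult_right_mono) auto
    thus ?thesis using R by simp
  qed
  have \<delta>R2: "\<delta> * R \<le> (1 - M) / 4"
  proof -
    have "\<delta> \<le> (1 - M) / (4 * R)" by (simp add: \<delta>_def)
    hence "\<delta> * R \<le> (1 - M) / (4 * R) * R" using R by (intro mult_right_mono) auto
    thus ?thesis using R by simp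
  qed
  have \<delta>Q: "\<delta> * Q \<le> \<epsilon>"
  proof -
    have "\<delta> \<le> \<epsilon> / Q" by (simp add: \<delta>_def)
    hence "\<delta> * Q \<le> \<epsilon> / Q * Q" using Q by (intro mult_right_mono) auto
    thus ?thesis using Q by simp
  qed
  show ?thesis
  proof (intro exI[of _ \<delta>] conjI allI impI \<delta>)
    fix \<nu> :: "real^'n" assume nd: "norm (\<nu> - g1) < \<delta>" and n0: "\<nu> \<noteq> 0"
    have B: "\<bar>\<nu> \<bullet> x - g1 \<bullet> x\<bar> \<le> \<delta> * R" if "x \<in> K" for x
    proof -
      have "\<bar>\<nu> \<bullet> x - g1 \<bullet> x\<bar> = \<bar>(\<nu> - g1) \<bullet> x\<bar>" by (simp add: inner_diff_left)
      also have "\<dots> \<le> norm (\<nu> - g1) * norm x" by (rule Cauchy_Schwarz_ineq2)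
      also have "\<dots> \<le> \<delta> * R" using nd R(2) that \<delta> by (intro mult_mono) auto
      finally show ?thesis .
    qed
    have "continuous_on K (\<lambda>x. \<nu> \<bullet> x)" by (intro continuous_intros)
    moreover have "K \<noteq> {}" using levelN_K[OF x1N] by auto
    ultimately obtain p where pK: "p \<in> K" and pmax: "\<forall>x\<in>K. \<nu> \<bullet> x \<le> \<nu> \<bullet> p"
      using continuous_attains_sup[OF compact_K] by blast
    have x1K: "x1 \<in> K" using levelN_K[OF x1N] .
    have nx1: "\<nu> \<bullet> x1 \<ge> 1 - \<delta> * R" using B[OF x1K] g1x1 by auto
    have np: "\<nu> \<bullet> p \<ge> 1 - \<delta> * R" using pmax x1K nx1 by force
    have dp: "dist p x1 < \<eta>"
    proof (rule ccontr)
      assume "\<not> dist p x1 < \<eta>"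
      hence "g1 \<bullet> p \<le> M" using M(2) pK by auto
      hence "\<nu> \<bullet> p \<le> M + \<delta> * R" using B[OF pK] by auto
      moreover have "(1::real) - M \<le> 2 * (\<delta> * R)" using calculation np by linarith
      moreover have "4 * (\<delta> * R) \<le> 1 - M" using \<delta>R2 by simp
      ultimately show False using M(1) \<delta> R(1) by (smt (verit) mult_pos_pos)
    qed
    have pp: "\<forall>i. p $ i > 0" using \<eta>(2) dp by blast
    have npos: "\<nu> \<bullet> p > 0" using np \<delta>R1 by linarith
    have pN: "p \<in> levelN f" using maxN[OF pK pmax npos] .
    have nprop: "normal_prop f p \<nu>"
      using lagrange[OF pp _ pmax n0] pN by (simp add: levelN_def)
    have nup: "\<nu> \<bullet> p \<le> 1 + \<delta> * R" using B[OF pK] support[OF x1N g1 pK] by auto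
    have yn: "y \<bullet> \<nu> \<ge> a - norm y * \<delta>"
    proof -
      have "\<bar>y \<bullet> \<nu> - y \<bullet> g1\<bar> = \<bar>y \<bullet> (\<nu> - g1)\<bar>" by (simp add: inner_diff_right)
      also have "\<dots> \<le> norm y * norm (\<nu> - g1)" by (rule Cauchy_Schwarz_ineq2)
      also have "\<dots> \<le> norm y * \<delta>" using nd by (intro mult_left_mono) auto
      finally show ?thesis by (auto simp: a_def)
    qed
    have "(a - \<epsilon>) * (p \<bullet> \<nu>) = (a - \<epsilon>) + (a - \<epsilon>) * (\<nu> \<bullet> p - 1)"
      by (simp add: inner_commute algebra_simps)
    also have "\<dots> \<le> (a - \<epsilon>) + \<bar>a - \<epsilon>\<bar> * (\<delta> * R)"
    proof -
      have "(a - \<epsilon>) * (\<nu> \<bullet> p - 1) \<le> \<bar>(a - \<epsilon>) * (\<nu> \<bullet> p - 1)\<bar>" by simp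
      also have "\<dots> = \<bar>a - \<epsilon>\<bar> * \<bar>\<nu> \<bullet> p - 1\<bar>" by (simp add: abs_mult)
      also have "\<dots> \<le> \<bar>a - \<epsilon>\<bar> * (\<delta> * R)" using np nup by (intro mult_left_mono) auto
      finally show ?thesis by simp
    qed
    also have "\<dots> \<le> a - norm y * \<delta>"
    proof -
      have "\<delta> * Q = \<delta> * norm y + \<bar>a - \<epsilon>\<bar> * (\<delta> * R) + \<delta>" by (simp add: Q_def algebra_simps)
      thus ?thesis using \<delta>Q \<delta> by (simp add: mult.commute)
    qed
    also have "\<dots> \<le> y \<bullet> \<nu>" using yn .
    finally show "\<exists>p. p \<in> levelN f \<and> normal_prop f p \<nu> \<and> (y \<bullet> g1 - \<epsilon>) * (p \<bullet> \<nu>) \<le> y \<bullet> \<nu>"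
      using pN nprop by (auto simp: a_def)
  qed
qed


lemma dense_k:
  assumes x1p: "\<forall>i. x1 $ i > 0" and fx1: "f x1 = 1" and g1: "is_grad f x1 g1"
    and y: "y \<in> orth" and \<epsilon>: "\<epsilon> > 0"
  shows "\<exists>k p. (\<forall>j. 1 \<le> k $ j) \<and> p \<in> levelN f \<and> normal_prop f p (ivec k) \<and>
           (y \<bullet> g1 - \<epsilon>) * (p \<bullet> ivec k) \<le> y \<bullet> ivec k"
proof -
  obtain \<delta> where \<delta>: "\<delta> > 0" and main: "\<And>\<nu>. norm (\<nu> - g1) < \<delta> \<Longrightarrow> \<nu> \<noteq> 0 \<Longrightarrow>
           (\<exists>p. p \<in> levelN f \<and> normal_prop f p \<nu> \<and> (y \<bullet> g1 - \<epsilon>) * (p \<bullet> \<nu>) \<le> y \<bullet> \<nu>)"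
    using dense_main[OF x1p fx1 g1 y \<epsilon>] by blast
  have x1o: "x1 \<in> orth" using x1p by (auto simp: orth_def less_imp_le)
  have x1N: "x1 \<in> levelN f" using x1o fx1 by (simp add: levelN_def)
  have g1x1: "g1 \<bullet> x1 = 1" using euler[OF x1o g1] fx1 by simp
  hence g10: "g1 \<noteq> 0" by auto
  have "g1 /\<^sub>R norm g1 \<in> orth" using normal_nonneg x1N g1 by blast
  hence "norm g1 *\<^sub>R (g1 /\<^sub>R norm g1) \<in> orth" by (rule orth_scale) simp
  hence g1o: "g1 \<in> orth" using g10 by simp
  define nn where "nn = real CARD('n)"
  have nn: "nn \<ge> 1" by (simp add: nn_def Suc_le_eq)
  define \<sigma> where "\<sigma> = \<delta> / (4 * nn)"
  have \<sigma>: "\<sigma> > 0" using \<delta> nn by (simp add: \<sigma>_def)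
  define w where "w = g1 + \<sigma> *\<^sub>R (\<chi> i. (1::real))"
  have wg: "norm (w - g1) \<le> \<delta> / 4"
  proof -
    have "norm (w - g1) \<le> (\<Sum>i\<in>UNIV. \<bar>(w - g1) $ i\<bar>)" by (rule norm_le_l1_cart)
    also have "\<dots> = nn * \<sigma>" using \<sigma> by (simp add: w_def nn_def)
    also have "\<dots> = \<delta> / 4" using nn by (simp add: \<sigma>_def)
    finally show ?thesis .
  qed
  have wpos: "w $ i > 0" for i
  proof -
    have "g1 $ i \<ge> 0" using g1o by (simp add: orth_def)
    thus ?thesis using \<sigma> by (simp add: w_def)
  qed
  obtain j :: nat where j: "4 * nn / \<delta> < real j" using reals_Archimedean2 by blast
  have jpos: "real j > 0" using j nn \<delta> by (smt (verit) divide_pos_pos)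
  define k where "k = (\<chi> i. \<lceil>real j * w $ i\<rceil>)"
  have k1: "1 \<le> k $ i" for i
    using wpos[of i] jpos by (simp add: k_def one_le_ceiling)
  define \<nu> where "\<nu> = (1 / real j) *\<^sub>R ivec k"
  have nw: "norm (\<nu> - w) \<le> nn / real j"
  proof -
    have "norm (\<nu> - w) \<le> (\<Sum>i\<in>UNIV. \<bar>(\<nu> - w) $ i\<bar>)" by (rule norm_le_l1_cart)
    also have "\<dots> \<le> (\<Sum>i\<in>(UNIV::'n set). 1 / real j)"
    proof (rule sum_mono)
      fix i
      have c: "real_of_int \<lceil>real j * w $ i\<rceil> - 1 < real j * w $ i \<and> real j * w $ i \<le> real_of_int \<lceil>real j * w $ i\<rceil>"
        by (rule ceiling_correct)
      have "(\<nu> - w) $ i = (real_of_int \<lceil>real j * w $ i\<rceil> - real j * w $ i) / real j"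
        using jpos by (simp add: \<nu>_def ivec_def k_def field_simps)
      thus "\<bar>(\<nu> - w) $ i\<bar> \<le> 1 / real j"
        using c jpos by (simp add: divide_right_mono)
    qed
    also have "\<dots> = nn / real j" by (simp add: nn_def)
    finally show ?thesis .
  qed
  have "nn / real j < \<delta> / 4"
  proof -
    have "4 * nn < \<delta> * real j" using j \<delta> by (simp add: divide_less_eq mult.commute)
    thus ?thesis using jpos by (simp add: divide_less_eq field_simps)
  qed
  hence "norm (\<nu> - g1) < \<delta>"
    using norm_diff_triangle_le[OF nw wg] \<delta> by linarith
  moreover have "\<nu> \<noteq> 0"
  proof
    assume "\<nu> = 0"
    hence "\<nu> $ undefined = 0" by simp
    moreover have "k $ undefined \<ge> 1" by (rule k1)
    ultimately show False using jpos by (simp add: \<nu>_def ivec_def)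
  qed
  ultimately obtain p where p: "p \<in> levelN f" "normal_prop f p \<nu>"
    "(y \<bullet> g1 - \<epsilon>) * (p \<bullet> \<nu>) \<le> y \<bullet> \<nu>" using main by blast
  have ik: "ivec k = real j *\<^sub>R \<nu>" using jpos by (simp add: \<nu>_def)
  have "normal_prop f p (ivec k)" unfolding ik by (rule normal_prop_scale[OF p(2) jpos])
  moreover have "(y \<bullet> g1 - \<epsilon>) * (p \<bullet> ivec k) \<le> y \<bullet> ivec k"
  proof -
    have "real j * ((y \<bullet> g1 - \<epsilon>) * (p \<bullet> \<nu>)) \<le> real j * (y \<bullet> \<nu>)"
      using p(3) jpos by (intro mult_left_mono) auto
    thus ?thesis unfolding ik by (simp add: algebra_simps)
  qed
  ultimately show ?thesis using k1 p(1) by blast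
qed

end


context toric begin

lemma grad_orth:
  assumes p: "p \<in> levelN f" and g: "is_grad f p g"
  shows "g \<in> orth" "g \<noteq> 0" "g \<bullet> p = 1"
proof -
  show gp: "g \<bullet> p = 1" using euler[OF _ g] p by (auto simp: levelN_def)
  thus g0: "g \<noteq> 0" by auto
  have "g /\<^sub>R norm g \<in> orth" using normal_nonneg p g by blast
  hence "norm g *\<^sub>R (g /\<^sub>R norm g) \<in> orth" by (rule orth_scale) simp
  thus "g \<in> orth" using g0 by simp
qed

lemma grad_bound:
  assumes p: "p \<in> levelN f" and g: "is_grad f p g"
  shows "norm g \<le> (\<Sum>i\<in>UNIV. f (axis i 1))"
proof -
  have go: "g \<in> orth" using grad_orth[OF p g] by simp
  have gi: "g $ i \<le> f (axis i 1)" for i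
  proof -
    have ao: "axis i (1::real) \<in> orth" by (auto simp: orth_def axis_def)
    have a0: "axis i (1::real) \<noteq> 0" by (simp add: axis_eq_0_iff)
    have fa: "f (axis i 1) > 0" using pos ao a0 by auto
    have "(1 / f (axis i 1)) *\<^sub>R axis i 1 \<in> K" using normalize_N[OF ao a0] levelN_K by blast
    hence "g \<bullet> ((1 / f (axis i 1)) *\<^sub>R axis i 1) \<le> 1" by (rule support[OF p g])
    hence "g $ i / f (axis i 1) \<le> 1" by (simp add: inner_axis)
    thus ?thesis using fa by (simp add: divide_le_eq)
  qed
  have "norm g \<le> (\<Sum>i\<in>UNIV. \<bar>g $ i\<bar>)" by (rule norm_le_l1_cart)
  also have "\<dots> \<le> (\<Sum>i\<in>UNIV. f (axis i 1))"
    using gi go by (intro sum_mono) (auto simp: orth_def)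
  finally show ?thesis .
qed

lemma ratio_le:
  assumes p: "p \<in> levelN f" and np: "normal_prop f p k" and y: "y \<in> orth"
  shows "y \<bullet> k \<le> f y * (p \<bullet> k)"
proof (cases "y = 0")
  case True thus ?thesis using f0 by simp
next
  case False
  have fy: "f y > 0" using pos y False by auto
  have "(1 / f y) *\<^sub>R y \<in> K" using normalize_N[OF y False] levelN_K by blast
  hence "k \<bullet> ((1 / f y) *\<^sub>R y) \<le> k \<bullet> p" using normal_facts(2)[OF p np] by blast
  hence "(y \<bullet> k) / f y \<le> p \<bullet> k" by (simp add: inner_commute)
  thus ?thesis using fy by (simp add: divide_le_eq mult.commute)
qed

lemma approx:
  assumes y: "y \<in> orth" and \<epsilon>: "\<epsilon> > 0"
  shows "\<exists>k p. (\<forall>j. 1 \<le> k $ j) \<and> p \<in> levelN f \<and> normal_prop f p (ivec k) \<and>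
           (f y - \<epsilon>) * (p \<bullet> ivec k) \<le> y \<bullet> ivec k"
proof -
  define one :: "real^'n" where "one = (\<chi> i. 1)"
  have one_o: "one \<in> orth" by (simp add: one_def orth_def)
  define G where "G = (\<Sum>i\<in>UNIV. f (axis i (1::real)))"
  have G0: "G \<ge> 0"
    unfolding G_def by (intro sum_nonneg) (use nonneg in \<open>auto simp: orth_def axis_def\<close>)
  have "\<exists>x1 g1. (\<forall>i. x1 $ i > 0) \<and> f x1 = 1 \<and> is_grad f x1 g1 \<and> y \<bullet> g1 \<ge> f y - \<epsilon> / 2"
  proof (cases "y = 0")
    case True
    define x1 where "x1 = (1 / f one) *\<^sub>R one"
    have one0: "one \<noteq> 0" by (simp add: one_def vec_eq_iff)
    have fo: "f one > 0" using pos one_o one0 by auto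
    have x1N: "x1 \<in> levelN f" using normalize_N[OF one_o one0] by (simp add: x1_def)
    obtain g1 where "is_grad f x1 g1" using regular x1N by blast
    moreover have "\<forall>i. x1 $ i > 0" using fo by (simp add: x1_def one_def)
    ultimately show ?thesis using True f0 x1N \<epsilon> by (auto simp: levelN_def)
  next
    case False
    have fy: "f y > 0" using pos y False by auto
    define x0 where "x0 = (1 / f y) *\<^sub>R y"
    have x0N: "x0 \<in> levelN f" using normalize_N[OF y False] by (simp add: x0_def)
    define z where "z = (\<lambda>s::real. x0 + s *\<^sub>R one)"
    have zo: "z s \<in> orth" if "s \<ge> 0" for s
      using x0N that one_o by (auto simp: z_def levelN_def intro!: orth_add orth_scale)
    have z0: "z s \<noteq> 0" if "s > 0" for s
    proof
      assume "z s = 0"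
      hence "(z s) $ undefined = 0" by simp
      moreover have "x0 $ undefined \<ge> 0" using x0N by (simp add: levelN_def orth_def)
      ultimately show False using that by (simp add: z_def one_def)
    qed
    define xs where "xs = (\<lambda>s. (1 / f (z s)) *\<^sub>R z s)"
    have fz0: "f (z 0) = 1" using x0N by (simp add: z_def levelN_def)
    have fzpos: "f (z s) > 0" if "s \<ge> 0" for s
    proof (cases "s = 0")
      case True thus ?thesis using fz0 by simp
    next
      case False thus ?thesis using pos zo[OF that] z0[of s] that by auto
    qed
    have cz: "continuous_on {0..} z" unfolding z_def by (intro continuous_intros)
    have cfz: "continuous_on {0..} (\<lambda>s. f (z s))"
      by (rule continuous_on_compose2[OF cont cz]) (use zo in auto)
    have cxs: "continuous_on {0..} xs"
      unfolding xs_def using fzpos by (intro continuous_intros cfz cz) (metis atLeast_iff less_irrefl)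
    have xs0: "xs 0 = x0" using fz0 by (simp add: xs_def z_def)
    define e' where "e' = \<epsilon> / (2 * (f y * G + 1))"
    have fyG: "f y * G \<ge> 0" using fy G0 by simp
    have e': "e' > 0" using \<epsilon> fyG by (simp add: e'_def add_nonneg_pos)
    obtain d where d: "d > 0" "\<And>s. s \<in> {0..} \<Longrightarrow> dist s 0 < d \<Longrightarrow> dist (xs s) (xs 0) < e'"
      using cxs[unfolded continuous_on_iff] e' by (metis atLeast_iff order_refl)
    define s where "s = d / 2"
    have s: "s > 0" "s \<in> {0..}" "dist s 0 < d" using d by (auto simp: s_def)
    have dx: "norm (xs s - x0) < e'" using d(2)[OF s(2,3)] xs0 by (simp add: dist_norm)
    have x1N: "xs s \<in> levelN f"
      using normalize_N[OF zo[of s] z0[of s]] s by (simp add: xs_def)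
    have x1p: "\<forall>i. xs s $ i > 0"
    proof
      fix i
      have "x0 $ i \<ge> 0" using x0N by (simp add: levelN_def orth_def)
      hence "z s $ i > 0" using s by (simp add: z_def one_def)
      thus "xs s $ i > 0" using fzpos[of s] s by (simp add: xs_def)
    qed
    obtain g1 where g1: "is_grad f (xs s) g1" using regular x1N by blast
    have gb: "norm g1 \<le> G" using grad_bound[OF x1N g1] by (simp add: G_def)
    have g1x: "g1 \<bullet> xs s = 1" using grad_orth[OF x1N g1] by simp
    have "\<bar>g1 \<bullet> (xs s - x0)\<bar> \<le> G * e'"
    proof -
      have "\<bar>g1 \<bullet> (xs s - x0)\<bar> \<le> norm g1 * norm (xs s - x0)" by (rule Cauchy_Schwarz_ineq2)
      also have "\<dots> \<le> G * e'" using gb dx G0 by (intro mult_mono) auto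
      finally show ?thesis .
    qed
    hence gx0: "g1 \<bullet> x0 \<ge> 1 - G * e'" using g1x by (auto simp: inner_diff_right)
    have yx0: "y = f y *\<^sub>R x0" using fy by (simp add: x0_def)
    have "y \<bullet> g1 = f y * (g1 \<bullet> x0)" by (subst yx0) (simp add: inner_commute)
    also have "\<dots> \<ge> f y * (1 - G * e')" using gx0 fy by (intro mult_left_mono) auto
    finally have yg: "y \<bullet> g1 \<ge> f y - f y * G * e'" by (simp add: algebra_simps)
    have "f y * G * e' \<le> \<epsilon> / 2"
    proof -
      have "f y * G * e' = \<epsilon> / 2 * (f y * G / (f y * G + 1))"
        by (simp add: e'_def field_simps)
      also have "\<dots> \<le> \<epsilon> / 2 * 1"
        using \<epsilon> fyG by (intro mult_left_mono) (auto simp: divide_le_eq)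
      finally show ?thesis by simp
    qed
    hence "y \<bullet> g1 \<ge> f y - \<epsilon> / 2" using yg by linarith
    thus ?thesis using x1p x1N g1 by (auto simp: levelN_def)
  qed
  then obtain x1 g1 where x1: "\<forall>i. x1 $ i > 0" "f x1 = 1" "is_grad f x1 g1" "y \<bullet> g1 \<ge> f y - \<epsilon> / 2"
    by blast
  obtain k p where kp: "\<forall>j. 1 \<le> k $ j" "p \<in> levelN f" "normal_prop f p (ivec k)"
    "(y \<bullet> g1 - \<epsilon> / 2) * (p \<bullet> ivec k) \<le> y \<bullet> ivec k"
    using dense_k[OF x1(1-3) y, of "\<epsilon>/2"] \<epsilon> by auto
  have pk: "p \<bullet> ivec k > 0" using normal_facts(3)[OF kp(2,3)] by (simp add: inner_commute)
  have "(f y - \<epsilon>) * (p \<bullet> ivec k) \<le> (y \<bullet> g1 - \<epsilon> / 2) * (p \<bullet> ivec k)"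
    using pk x1(4) \<epsilon> by (intro mult_right_mono) auto
  thus ?thesis using kp by (meson order_trans)
qed

end



lemma nvec_orth: "nvec m \<in> orth" by (simp add: nvec_def orth_def)

lemma ivec_orth_iff: "ivec k \<in> orth \<longleftrightarrow> (\<forall>j. 0 \<le> k $ j)" by (simp add: ivec_def orth_def)

context toric begin

lemma Em_eq:
  assumes hb: "hb > 0"
  shows "Em f hb m = ereal (f (hb *\<^sub>R nvec m))"
proof -
  define y where "y = hb *\<^sub>R nvec m"
  have y: "y \<in> orth" unfolding y_def using hb by (intro orth_scale nvec_orth) simp
  have hy: "hb * (nvec m \<bullet> ivec k) = y \<bullet> ivec k" for k by (simp add: y_def)
  show ?thesis unfolding Em_def y_def[symmetric]
  proof (rule antisym)
    show "(SUP ka\<in>action_spectrum f. ereal (hb * (nvec m \<bullet> ivec (fst ka)) / snd ka)) \<le> ereal (f y)"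
    proof (rule SUP_least)
      fix ka assume "ka \<in> action_spectrum f"
      then obtain k p where ka: "ka = (k, p \<bullet> ivec k)" "p \<in> levelN f" "normal_prop f p (ivec k)"
        unfolding action_spectrum_def by blast
      have pk: "p \<bullet> ivec k > 0" using normal_facts(3)[OF ka(2,3)] by (simp add: inner_commute)
      have "y \<bullet> ivec k \<le> f y * (p \<bullet> ivec k)" by (rule ratio_le[OF ka(2,3) y])
      hence "(y \<bullet> ivec k) / (p \<bullet> ivec k) \<le> f y" using pk by (simp add: divide_le_eq)
      thus "ereal (hb * (nvec m \<bullet> ivec (fst ka)) / snd ka) \<le> ereal (f y)" by (simp add: ka hy)
    qed
  next
    show "ereal (f y) \<le> (SUP ka\<in>action_spectrum f. ereal (hb * (nvec m \<bullet> ivec (fst ka)) / snd ka))"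
    proof (rule ereal_le_epsilon2)
      fix e :: real assume e: "0 < e"
      obtain k p where kp: "\<forall>j. 1 \<le> k $ j" "p \<in> levelN f" "normal_prop f p (ivec k)"
        "(f y - e) * (p \<bullet> ivec k) \<le> y \<bullet> ivec k" using approx[OF y e] by blast
      have k0: "k \<noteq> 0"
      proof
        assume "k = 0" thus False using kp(1)[rule_format, of undefined] by simp
      qed
      have mem: "(k, p \<bullet> ivec k) \<in> action_spectrum f"
        unfolding action_spectrum_def using k0 kp(2,3) by blast
      have pk: "p \<bullet> ivec k > 0" using normal_facts(3)[OF kp(2,3)] by (simp add: inner_commute)
      have "f y - e \<le> (y \<bullet> ivec k) / (p \<bullet> ivec k)" using kp(4) pk by (simp add: le_divide_eq)
      hence "ereal (f y - e) \<le> (SUP ka\<in>action_spectrum f. ereal (hb * (nvec m \<bullet> ivec (fst ka)) / snd ka))"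
        by (intro SUP_upper2[OF mem]) (simp add: hy)
      hence "ereal (f y - e) + ereal e \<le> (SUP ka\<in>action_spectrum f. ereal (hb * (nvec m \<bullet> ivec (fst ka)) / snd ka)) + ereal e"
        by (rule add_right_mono)
      thus "ereal (f y) \<le> (SUP ka\<in>action_spectrum f. ereal (hb * (nvec m \<bullet> ivec (fst ka)) / snd ka)) + ereal e"
        by simp
    qed
  qed
qed

lemma spectrum_image: "action_spectrum f = (\<lambda>k. (k, act f k)) ` (Nset f 0 - {0})"
proof (intro equalityI subsetI)
  fix ka assume "ka \<in> action_spectrum f"
  then obtain k p where ka: "ka = (k, p \<bullet> ivec k)" "k \<noteq> 0" "p \<in> levelN f" "normal_prop f p (ivec k)"
    unfolding action_spectrum_def by blast
  have "ivec k \<in> orth" using normal_facts(1)[OF ka(3,4)] .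
  hence "k \<in> Nset f 0 - {0}" using ka(2-4) by (auto simp: Nset_def ivec_orth_iff)
  moreover have "ka = (k, act f k)" using act_eq[OF ka(3,4)] ka(1) by simp
  ultimately show "ka \<in> (\<lambda>k. (k, act f k)) ` (Nset f 0 - {0})" by blast
next
  fix ka assume "ka \<in> (\<lambda>k. (k, act f k)) ` (Nset f 0 - {0})"
  then obtain k where k: "ka = (k, act f k)" "k \<in> Nset f 0" "k \<noteq> 0" by blast
  then obtain p where p: "p \<in> levelN f" "normal_prop f p (ivec k)" unfolding Nset_def by blast
  show "ka \<in> action_spectrum f"
    unfolding action_spectrum_def using k act_eq[OF p] p by auto
qed

lemma Em_alt: "Em f hb m = (SUP k\<in>Nset f 0 - {0}. ereal (hb * (nvec m \<bullet> ivec k) / act f k))"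
  unfolding Em_def spectrum_image by (simp add: image_image)

end



context toric begin

lemma P3a:
  assumes hb: "hb > 0" and e: "e > f (hb *\<^sub>R nvec m)"
  shows "(SUP l\<in>{1::nat..}. INF k\<in>Nset f (int l). ereal (e * act f k - hb * (nvec m \<bullet> ivec k))) = \<infinity>"
proof -
  define y where "y = hb *\<^sub>R nvec m"
  have y: "y \<in> orth" unfolding y_def using hb by (intro orth_scale nvec_orth) simp
  have hy: "hb * (nvec m \<bullet> ivec k) = y \<bullet> ivec k" for k by (simp add: y_def)
  define i0 :: 'n where "i0 = undefined"
  have ao: "axis i0 (1::real) \<in> orth" by (auto simp: orth_def axis_def)
  have a0: "axis i0 (1::real) \<noteq> 0" by (simp add: axis_eq_0_iff)
  have fa: "f (axis i0 1) > 0" using pos ao a0 by auto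
  define r where "r = 1 / f (axis i0 1)"
  have r: "r > 0" using fa by (simp add: r_def)
  have rK: "r *\<^sub>R axis i0 1 \<in> K" using normalize_N[OF ao a0] levelN_K by (simp add: r_def)
  define c where "c = (e - f y) * r"
  have c: "c > 0" using e r by (simp add: c_def y_def)
  have lb: "ereal (c * real l) \<le> (INF k\<in>Nset f (int l). ereal (e * act f k - hb * (nvec m \<bullet> ivec k)))"
    for l :: nat
  proof (rule INF_greatest)
    fix k assume "k \<in> Nset f (int l)"
    then obtain p where kl: "\<forall>j. int l \<le> k $ j" and p: "p \<in> levelN f" "normal_prop f p (ivec k)"
      unfolding Nset_def by blast
    have A: "act f k = p \<bullet> ivec k" by (rule act_eq[OF p])
    have "ivec k \<bullet> (r *\<^sub>R axis i0 1) \<le> ivec k \<bullet> p" using normal_facts(2)[OF p] rK by blast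
    moreover have "ivec k \<bullet> axis i0 1 = real_of_int (k $ i0)" by (simp add: inner_axis ivec_def)
    ultimately have "r * real_of_int (k $ i0) \<le> act f k" by (simp add: A inner_commute)
    moreover have "real l \<le> real_of_int (k $ i0)"
    proof -
      have "int l \<le> k $ i0" using kl by blast
      hence "real_of_int (int l) \<le> real_of_int (k $ i0)" by linarith
      thus ?thesis by simp
    qed
    ultimately have Al: "r * real l \<le> act f k" using r by (smt (verit) mult_left_mono)
    have "y \<bullet> ivec k \<le> f y * act f k" using ratio_le[OF p y] A by (simp add: inner_commute)
    hence "(e - f y) * act f k \<le> e * act f k - y \<bullet> ivec k" by (simp add: algebra_simps)
    moreover have "c * real l \<le> (e - f y) * act f k"
      using Al e by (simp add: c_def y_def mult.assoc mult_left_mono)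
    ultimately show "ereal (c * real l) \<le> ereal (e * act f k - hb * (nvec m \<bullet> ivec k))"
      by (simp add: hy)
  qed
  have "(SUP l\<in>{1::nat..}. INF k\<in>Nset f (int l). ereal (e * act f k - hb * (nvec m \<bullet> ivec k))) = top"
  proof (subst SUP_eq_top_iff, intro allI impI)
    fix x :: ereal assume "x < top"
    then obtain B where B: "x \<le> ereal B" by (cases x) auto
    obtain n :: nat where n: "\<bar>B\<bar> / c < real n" using reals_Archimedean2 by blast
    have "\<bar>B\<bar> < c * real (n + 1)" using n c by (simp add: divide_less_eq algebra_simps)
    hence "x < ereal (c * real (n + 1))" using B by (smt (verit) ereal_less_eq(3) order.strict_trans1 less_ereal.simps(1))
    also have "\<dots> \<le> (INF k\<in>Nset f (int (n + 1)). ereal (e * act f k - hb * (nvec m \<bullet> ivec k)))"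
      by (rule lb)
    finally show "\<exists>l\<in>{1::nat..}. x < (INF k\<in>Nset f (int l). ereal (e * act f k - hb * (nvec m \<bullet> ivec k)))"
      by (intro bexI[of _ "n + 1"]) auto
  qed
  thus ?thesis by (simp add: top_ereal_def)
qed


lemma P3b:
  assumes hb: "hb > 0" and e: "e < f (hb *\<^sub>R nvec m)"
  shows "(SUP l\<in>{1::nat..}. INF k\<in>Nset f (int l). ereal (e * act f k - hb * (nvec m \<bullet> ivec k))) = -\<infinity>"
proof -
  define y where "y = hb *\<^sub>R nvec m"
  have y: "y \<in> orth" unfolding y_def using hb by (intro orth_scale nvec_orth) simp
  have hy: "hb * (nvec m \<bullet> ivec k) = y \<bullet> ivec k" for k by (simp add: y_def)
  define \<epsilon> where "\<epsilon> = (f y - e) / 2"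
  have \<epsilon>: "\<epsilon> > 0" using e by (simp add: \<epsilon>_def y_def)
  obtain k0 p where kp: "\<forall>j. 1 \<le> k0 $ j" "p \<in> levelN f" "normal_prop f p (ivec k0)"
    "(f y - \<epsilon>) * (p \<bullet> ivec k0) \<le> y \<bullet> ivec k0" using approx[OF y \<epsilon>] by blast
  define A0 where "A0 = p \<bullet> ivec k0"
  have A0: "A0 > 0" using normal_facts(3)[OF kp(2,3)] by (simp add: A0_def inner_commute)
  define d where "d = e * A0 - y \<bullet> ivec k0"
  have d: "d < 0"
  proof -
    have "e < f y - \<epsilon>" using e by (simp add: \<epsilon>_def y_def field_simps)
    hence "e * A0 < (f y - \<epsilon>) * A0" using A0 by (intro mult_strict_right_mono) auto
    thus ?thesis using kp(4) by (simp add: d_def A0_def)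
  qed
  define kt where "kt = (\<lambda>t::nat. (\<chi> j. int t * k0 $ j))"
  have ivkt: "ivec (kt t) = real t *\<^sub>R ivec k0" for t
    by (simp add: kt_def ivec_def vec_eq_iff)
  have val: "ereal (e * act f (kt t) - hb * (nvec m \<bullet> ivec (kt t))) = ereal (real t * d)"
    and mem: "l \<le> t \<Longrightarrow> kt t \<in> Nset f (int l)" if t: "t \<ge> 1" for t l
  proof -
    have tp: "real t > 0" using t by simp
    have np: "normal_prop f p (ivec (kt t))" unfolding ivkt by (rule normal_prop_scale[OF kp(3) tp])
    have "act f (kt t) = real t * A0" using act_eq[OF kp(2) np] by (simp add: ivkt A0_def)
    thus "ereal (e * act f (kt t) - hb * (nvec m \<bullet> ivec (kt t))) = ereal (real t * d)"
      by (simp add: hy ivkt d_def algebra_simps)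
    assume "l \<le> t"
    have "int l \<le> kt t $ j" for j
    proof -
      have "int t * 1 \<le> int t * k0 $ j" using kp(1) by (intro mult_left_mono) auto
      thus ?thesis using \<open>l \<le> t\<close> by (simp add: kt_def)
    qed
    thus "kt t \<in> Nset f (int l)" unfolding Nset_def using kp(2) np by blast
  qed
  have inf: "(INF k\<in>Nset f (int l). ereal (e * act f k - hb * (nvec m \<bullet> ivec k))) = -\<infinity>"
    if l: "l \<ge> 1" for l :: nat
  proof -
    have "(INF k\<in>Nset f (int l). ereal (e * act f k - hb * (nvec m \<bullet> ivec k))) = bot"
    proof (subst INF_eq_bot_iff, intro allI impI)
      fix x :: ereal assume "bot < x"
      then obtain B where B: "ereal B \<le> x" by (cases x) auto
      obtain n :: nat where n: "\<bar>B\<bar> / (- d) < real n" using reals_Archimedean2 by blast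
      define t where "t = l + n"
      have t1: "t \<ge> 1" "l \<le> t" using l by (auto simp: t_def)
      have "real t * d \<le> real n * d" using d by (simp add: t_def mult_right_mono_neg)
      also have "real n * d < - \<bar>B\<bar>"
      proof -
        have "\<bar>B\<bar> < real n * (- d)" using n d by (subst (asm) pos_divide_less_eq) auto
        thus ?thesis by simp
      qed
      also have "\<dots> \<le> B" by simp
      finally have "ereal (real t * d) < ereal B" by simp
      hence "ereal (real t * d) < x" using B by (rule order.strict_trans2)
      hence "ereal (e * act f (kt t) - hb * (nvec m \<bullet> ivec (kt t))) < x"
        using val[OF t1(1)] by simp
      thus "\<exists>k\<in>Nset f (int l). ereal (e * act f k - hb * (nvec m \<bullet> ivec k)) < x"
        using mem[OF t1] by blast
    qed
    thus ?thesis by (simp add: bot_ereal_def)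
  qed
  have "(SUP l\<in>{1::nat..}. INF k\<in>Nset f (int l). ereal (e * act f k - hb * (nvec m \<bullet> ivec k)))
        = (SUP l\<in>{1::nat..}. -\<infinity>)"
    by (rule SUP_cong) (auto simp: inf)
  also have "\<dots> = -\<infinity>" by simp
  finally show ?thesis .
qed

end

theorem proposition4p3:
  fixes f :: "real^'n \<Rightarrow> real" and hb :: real
  assumes cont: "continuous_on orth f"
    and nonneg: "\<forall>p\<in>orth. 0 \<le> f p"
    and pos: "\<forall>p\<in>orth - {0}. 0 < f p"
    and homog: "\<forall>p\<in>orth. \<forall>t>0. f (t *\<^sub>R p) = t * f p"
    and smooth: "\<exists>U F. open U \<and> orth - {0} \<subseteq> U \<and> smooth_on U F \<and>
                   (\<forall>x\<in>orth - {0}. F x = f x) \<and>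
                   (\<forall>p\<in>levelN f. \<forall>v. v \<noteq> 0 \<and> gradF F p \<bullet> v = 0 \<longrightarrow> 0 < v \<bullet> hessF F p v)"
    and regular: "\<forall>p\<in>levelN f. \<exists>g. is_grad f p g \<and> g \<noteq> 0"
    and normal_nonneg: "\<forall>p\<in>levelN f. \<forall>g. is_grad f p g \<longrightarrow> g /\<^sub>R norm g \<in> orth"
    and convex: "convex {p\<in>orth. f p \<le> 1}"
    and hb: "0 < hb"
  shows "(\<forall>m::nat^'n. Em f hb m = ereal (f (hb *\<^sub>R nvec m))) \<and>
         (\<forall>m::nat^'n. Em f hb m =
            (SUP k\<in>Nset f 0 - {0}. ereal (hb * (nvec m \<bullet> ivec k) / act f k))) \<and>
         (\<forall>m::nat^'n. \<forall>e'::real.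
            (\<forall>e::real.
               (e > e' \<longrightarrow> (SUP l\<in>{1::nat..}. INF k\<in>Nset f (int l).
                               ereal (e * act f k - hb * (nvec m \<bullet> ivec k))) = \<infinity>) \<and>
               (e < e' \<longrightarrow> (SUP l\<in>{1::nat..}. INF k\<in>Nset f (int l).
                               ereal (e * act f k - hb * (nvec m \<bullet> ivec k))) = -\<infinity>))
            \<longleftrightarrow> ereal e' = Em f hb m)"
proof -
  interpret toric f using cont nonneg pos homog smooth regular normal_nonneg convex
    by unfold_locales
  have E: "Em f hb m = ereal (f (hb *\<^sub>R nvec m))" for m using Em_eq hb by blast
  show ?thesis
  proof (intro conjI allI)
    fix m :: "nat^'n" show "Em f hb m = ereal (f (hb *\<^sub>R nvec m))" by (rule E)
  next
    fix m :: "nat^'n"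
    show "Em f hb m = (SUP k\<in>Nset f 0 - {0}. ereal (hb * (nvec m \<bullet> ivec k) / act f k))"
      by (rule Em_alt)
  next
    fix m :: "nat^'n" and e' :: real
    define S where "S = (\<lambda>e. (SUP l\<in>{1::nat..}. INF k\<in>Nset f (int l).
                               ereal (e * act f k - hb * (nvec m \<bullet> ivec k))))"
    define fy where "fy = f (hb *\<^sub>R nvec m)"
    have Pa: "e > fy \<Longrightarrow> S e = \<infinity>" for e unfolding S_def fy_def by (rule P3a[OF hb])
    have Pb: "e < fy \<Longrightarrow> S e = -\<infinity>" for e unfolding S_def fy_def by (rule P3b[OF hb])
    have "(\<forall>e. (e > e' \<longrightarrow> S e = \<infinity>) \<and> (e < e' \<longrightarrow> S e = -\<infinity>)) \<longleftrightarrow> ereal e' = Em f hb m"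
    proof
      assume H: "\<forall>e. (e > e' \<longrightarrow> S e = \<infinity>) \<and> (e < e' \<longrightarrow> S e = -\<infinity>)"
      have "e' = fy"
      proof (rule ccontr)
        assume "e' \<noteq> fy"
        hence "e' < fy \<or> fy < e'" by linarith
        thus False
        proof
          assume lt: "e' < fy"
          define e where "e = (e' + fy) / 2"
          have "e > e'" "e < fy" using lt by (auto simp: e_def)
          thus False using H Pb[of e] by auto
        next
          assume lt: "fy < e'"
          define e where "e = (e' + fy) / 2"
          have "e < e'" "e > fy" using lt by (auto simp: e_def)
          thus False using H Pa[of e] by auto
        qed
      qed
      thus "ereal e' = Em f hb m" using E by (simp add: fy_def)
    next
      assume "ereal e' = Em f hb m"
      hence "e' = fy" using E by (simp add: fy_def)
      thus "\<forall>e. (e > e' \<longrightarrow> S e = \<infinity>) \<and> (e < e' \<longrightarrow> S e = -\<infinity>)" using Pa Pb by auto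
    qed
    thus "(\<forall>e::real.
               (e > e' \<longrightarrow> (SUP l\<in>{1::nat..}. INF k\<in>Nset f (int l).
                               ereal (e * act f k - hb * (nvec m \<bullet> ivec k))) = \<infinity>) \<and>
               (e < e' \<longrightarrow> (SUP l\<in>{1::nat..}. INF k\<in>Nset f (int l).
                               ereal (e * act f k - hb * (nvec m \<bullet> ivec k))) = -\<infinity>))
            \<longleftrightarrow> ereal e' = Em f hb m" unfolding S_def .
  qed
qed

end
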